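(* Let $|\psi\rangle_{ABC}$ be a three-qubit pure state, each qubit carrying the Hamiltonian $H_A=H_B=H_C=|1\rangle\langle1|$, and let $s=\{A,B,C\}$. If $M^{(s)}_E(|\psi\rangle_{ABC})>\frac12$, then $|\psi\rangle_{ABC}$ is genuinely multipartite entangled, i.e. it is not of the form $|\phi\rangle_{XY}\otimes|\chi\rangle_Z$ for any bipartition $\{X,Y\}|Z$ of $\{A,B,C\}$.
   Context: For a multi-qubit subsystem $X$ the Hamiltonian is $H_X=\sum_{i\in X}H_i$. For a state $\rho_X$ with eigenvalues $p_0\ge p_1\ge\cdots$ and $H_X$ with eigenvalues $0=\epsilon_0\le\epsilon_1\le\cdots$, the passive-state energy is $\mathrm{tr}(\rho_X^pH_X)=\sum_jp_j\epsilon_j$. For a pure state $|\psi\rangle$ and $X\subseteq\{A,B,C\}$, $\Delta_{X|X^c}(|\psi\rangle)=\mathrm{tr}(\rho_X^pH_X)+\mathrm{tr}(\rho_{X^c}^pH_{X^c})$ with $\rho_X$ the marginal, and $\Delta=0$ for $X=\emptyset$ or $X=\{A,B,C\}$. Then $M^{(s)}_E(|\psi\rangle)=2^{-3}\sum_{X\subseteq\{A,B,C\}}\Delta_{X|X^c}(|\psi\rangle)$. *)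

theory Defs
  imports "Jordan_Normal_Form.Char_Poly" "HOL-Computational_Algebra.Fundamental_Theorem_Algebra"
begin

text \<open>Three qubits A, B, C are labelled 0, 1, 2. A three-qubit state is a vector in C^8;
  basis index k < 8 encodes the computational basis state in which qubit t is |1> iff
  bit t of k is set.\<close>

definition qubits :: "nat set" where "qubits = {0, 1, 2}"

definition bitq :: "nat \<Rightarrow> nat \<Rightarrow> bool" where
  "bitq k t = odd (k div 2 ^ t)"

text \<open>Index (in 0 ..< 2^card X) of the restriction of basis state k to the qubits in X
  (qubits of X in increasing order, the i-th one being bit i).\<close>
definition sub_index :: "nat set \<Rightarrow> nat \<Rightarrow> nat" where
  "sub_index X k = (\<Sum>t<card X. if bitq k (sorted_list_of_set X ! t) then 2 ^ t else 0)"

definition is_pure_state :: "complex vec \<Rightarrow> bool" where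
  "is_pure_state \<psi> \<longleftrightarrow> dim_vec \<psi> = 8 \<and> (\<Sum>k<8. (cmod (\<psi> $ k))^2) = 1"

text \<open>Reduced density matrix (partial trace over the complement of X) of |psi><psi|.\<close>
definition reduced :: "complex vec \<Rightarrow> nat set \<Rightarrow> complex mat" where
  "reduced \<psi> X = mat (2 ^ card X) (2 ^ card X) (\<lambda>(i, j).
     \<Sum>k\<in>{k. k < 8 \<and> sub_index X k = i}.
       \<Sum>l\<in>{l. l < 8 \<and> sub_index X l = j \<and> sub_index (qubits - X) l = sub_index (qubits - X) k}.
         \<psi> $ k * cnj (\<psi> $ l))"

text \<open>H_X = sum over qubits i in X of H_i (tensored with identities), with H_i = |1><1|.\<close>
definition ham :: "nat set \<Rightarrow> complex mat" where
  "ham X = mat (2 ^ card X) (2 ^ card X) (\<lambda>(i, j).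
     \<Sum>t<card X. if i = j \<and> bitq i t then 1 else 0)"

definition eigs :: "complex mat \<Rightarrow> real list" where
  "eigs A = sorted_list_of_multiset (image_mset Re (proots (char_poly A)))"

text \<open>Passive-state energy: p_0 \<ge> p_1 \<ge> ... paired with 0 = eps_0 \<le> eps_1 \<le> ....\<close>
definition passive_energy :: "complex mat \<Rightarrow> complex mat \<Rightarrow> real" where
  "passive_energy \<rho> H = (\<Sum>j<dim_row \<rho>. rev (eigs \<rho>) ! j * eigs H ! j)"

definition Delta :: "complex vec \<Rightarrow> nat set \<Rightarrow> real" where
  "Delta \<psi> X = (if X = {} \<or> X = qubits then 0
     else passive_energy (reduced \<psi> X) (ham X)
        + passive_energy (reduced \<psi> (qubits - X)) (ham (qubits - X)))"

definition ME :: "complex vec \<Rightarrow> real" where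
  "ME \<psi> = (1 / 2 ^ 3) * (\<Sum>X\<in>Pow qubits. Delta \<psi> X)"

definition product_across :: "complex vec \<Rightarrow> nat \<Rightarrow> bool" where
  "product_across \<psi> Z \<longleftrightarrow> (\<exists>\<phi> \<chi> :: nat \<Rightarrow> complex. \<forall>k<8.
      \<psi> $ k = \<phi> (sub_index (qubits - {Z}) k) * \<chi> (sub_index {Z} k))"

definition genuinely_entangled :: "complex vec \<Rightarrow> bool" where
  "genuinely_entangled \<psi> \<longleftrightarrow> (\<forall>Z\<in>qubits. \<not> product_across \<psi> Z)"

end

theory Submission
  imports Defs
begin


lemma proots_linear_prod: "proots (\<Prod>r\<leftarrow>rs. [:-r,1:]) = mset (rs :: complex list)"
proof (induction rs)
  case Nil then show ?case by simp
next
  case (Cons r rs)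
  have nz: "(\<Prod>r\<leftarrow>rs. [:-r,1:]) \<noteq> (0::complex poly)"
    by (auto simp: prod_list_zero_iff)
  have "proots (\<Prod>r\<leftarrow>r#rs. [:-r,1:]) = proots [:-r,1:] + proots (\<Prod>r\<leftarrow>rs. [:-r,1:])"
    using proots_mult[OF _ nz, of "[:-r,1:]"] by (simp only: list.map prod_list.Cons) simp
  also have "proots [:-r,1:] = {#r#}" by simp
  finally show ?case using Cons by simp
qed

lemma eigs_prod: "char_poly A = (\<Prod>r\<leftarrow>rs. [:-r,1:]) \<Longrightarrow> eigs A = sort (map Re rs)"
  unfolding eigs_def by (simp add: proots_linear_prod sorted_list_of_multiset_mset[symmetric] del: sorted_list_of_multiset_mset)

lemma ham_carrier: "ham X \<in> carrier_mat (2^card X) (2^card X)"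
  unfolding ham_def by simp

lemma ham_ut: "upper_triangular (ham X)"
  unfolding ham_def upper_triangular_def by auto

lemma ham_eigs1: assumes "card X = 1" shows "eigs (ham X) = [0,1]"
proof -
  have cp: "char_poly (ham X) = (\<Prod>a\<leftarrow>diag_mat (ham X). [:- a, 1:])"
    by (rule char_poly_upper_triangular[OF ham_carrier ham_ut])
  have "diag_mat (ham X) = [0,1]"
    using assms by (simp add: diag_mat_def ham_def upt_conv_Cons bitq_def)
  with cp have "char_poly (ham X) = (\<Prod>a\<leftarrow>[0,1]. [:- a, 1:])" by simp
  from eigs_prod[OF this] show ?thesis by simp
qed

lemma ham_eigs2: assumes "card X = 2" shows "eigs (ham X) = [0,1,1,2]"
proof -
  have cp: "char_poly (ham X) = (\<Prod>a\<leftarrow>diag_mat (ham X). [:- a, 1:])"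
    by (rule char_poly_upper_triangular[OF ham_carrier ham_ut])
  have "diag_mat (ham X) = [0,1,1,2]"
    using assms by (simp add: diag_mat_def ham_def upt_conv_Cons bitq_def lessThan_nat_numeral)
  with cp have "char_poly (ham X) = (\<Prod>a\<leftarrow>[0,1,1,2]. [:- a, 1:])" by simp
  from eigs_prod[OF this] show ?thesis by simp
qed

lemma sorted_first_le: "sorted e \<Longrightarrow> x \<in> set e \<Longrightarrow> e ! 0 \<le> x"
proof -
  assume s: "sorted e" and "x \<in> set e"
  then obtain i where "i < length e" "e ! i = x" by (auto simp: in_set_conv_nth)
  then show ?thesis using sorted_nth_mono[OF s, of 0 i] by simp
qed

lemma sorted_last_ge: "sorted e \<Longrightarrow> x \<in> set e \<Longrightarrow> x \<le> e ! (length e - 1)"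
proof -
  assume s: "sorted e" and "x \<in> set e"
  then obtain i where "i < length e" "e ! i = x" by (auto simp: in_set_conv_nth)
  then show ?thesis using sorted_nth_mono[OF s, of i "length e - 1"] by simp
qed

lemma pe2:
  assumes "dim_row A = 2" "char_poly A = (\<Prod>r\<leftarrow>rs. [:-r,1:])" "length rs = 2" "card S = 1" "r \<in> set rs"
  shows "passive_energy A (ham S) \<le> Re r"
proof -
  define e where "e = sort (map Re rs)"
  have ei: "eigs A = e" using eigs_prod[OF assms(2)] e_def by simp
  have le: "length e = 2" using assms(3) e_def by simp
  then obtain a b where ab: "e = [a,b]"
    by (metis (no_types, lifting) length_0_conv length_Suc_conv numeral_2_eq_2)
  have pe: "passive_energy A (ham S) = e ! 0"
    unfolding passive_energy_def ei ham_eigs1[OF assms(4)] assms(1) ab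
    by (simp add: lessThan_nat_numeral)
  have "Re r \<in> set e" using assms(5) e_def by simp
  then show ?thesis unfolding pe by (intro sorted_first_le) (auto simp: e_def)
qed

lemma pe4:
  assumes "dim_row A = 4" "char_poly A = (\<Prod>r\<leftarrow>rs. [:-r,1:])" "length rs = 4" "card S = 2"
    "r \<in> set rs" "r' \<in> set rs"
  shows "passive_energy A (ham S) \<le> (\<Sum>x\<leftarrow>rs. Re x) - Re r + Re r'"
proof -
  define e where "e = sort (map Re rs)"
  have ei: "eigs A = e" using eigs_prod[OF assms(2)] e_def by simp
  have le: "length e = 4" using assms(3) e_def by simp
  then obtain a b c d where abcd: "e = [a,b,c,d]"
  proof -
    have "length e = Suc (Suc (Suc (Suc 0)))" using le by simp
    then show ?thesis using that by (auto simp: length_Suc_conv)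
  qed
  have pe: "passive_energy A (ham S) = c + b + 2 * a"
    unfolding passive_energy_def ei ham_eigs2[OF assms(4)] assms(1) abcd
    by (simp add: lessThan_nat_numeral)
  have "sum_list e = (\<Sum>x\<leftarrow>rs. Re x)"
    unfolding e_def by (metis sum_mset_sum_list mset_sort mset_map)
  moreover have m: "Re r \<in> set e" "Re r' \<in> set e" using assms(5,6) e_def by auto
  have s: "sorted e" by (simp add: e_def)
  have "e!0 \<le> Re r'" by (rule sorted_first_le[OF s m(2)])
  moreover have "Re r \<le> e!(length e - 1)" by (rule sorted_last_ge[OF s m(1)])
  ultimately show ?thesis unfolding pe abcd by simp
qed

lemma det_mat_Suc:
  "det (mat (Suc n) (Suc n) f) = (\<Sum>i<Suc n. (-1)^i * f (i,0) *
     det (mat n n (\<lambda>(i',j'). f (if i' < i then i' else Suc i', Suc j'))))"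
proof -
  have A: "mat (Suc n) (Suc n) f \<in> carrier_mat (Suc n) (Suc n)" by simp
  have "det (mat (Suc n) (Suc n) f) = (\<Sum>i<Suc n. mat (Suc n) (Suc n) f $$ (i,0) * cofactor (mat (Suc n) (Suc n) f) i 0)"
    by (rule laplace_expansion_column[OF A]) simp
  also have "\<dots> = (\<Sum>i<Suc n. (-1)^i * f (i,0) *
     det (mat n n (\<lambda>(i',j'). f (if i' < i then i' else Suc i', Suc j'))))"
  proof (rule sum.cong[OF refl])
    fix i assume i: "i \<in> {..<Suc n}"
    have "mat_delete (mat (Suc n) (Suc n) f) i 0 =
          mat n n (\<lambda>(i',j'). f (if i' < i then i' else Suc i', Suc j'))"
      by (rule eq_matI) (auto simp: mat_delete_def)
    then show "mat (Suc n) (Suc n) f $$ (i, 0) * cofactor (mat (Suc n) (Suc n) f) i 0 =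
      (-1)^i * f (i,0) * det (mat n n (\<lambda>(i',j'). f (if i' < i then i' else Suc i', Suc j')))"
      using i by (simp add: cofactor_def)
  qed
  finally show ?thesis .
qed

lemma det_mat_0: "det (mat 0 0 f) = 1" by simp

lemma charpoly_eval: fixes A :: "complex mat" assumes A: "A \<in> carrier_mat n n"
  shows "poly (char_poly A) k = det (mat n n (\<lambda>(i,j). (if i = j then k else 0) - A$$(i,j)))"
proof -
  have "- char_matrix A k = mat n n (\<lambda>(i,j). (if i = j then k else 0) - A$$(i,j))"
    using A by (intro eq_matI) (auto simp: char_matrix_def)
  then show ?thesis using char_poly_matrix[OF A] by simp
qed

lemma charpoly_eqI: fixes A :: "complex mat" assumes A: "A \<in> carrier_mat n n"
  and "\<And>k. det (mat n n (\<lambda>(i,j). (if i = j then k else 0) - A$$(i,j))) = poly q k"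
  shows "char_poly A = q"
proof -
  have "poly (char_poly A) = poly q" by (rule ext) (simp add: charpoly_eval[OF A] assms(2))
  then show ?thesis using poly_eq_poly_eq_iff by blast
qed

lemma det2: "det (mat 2 2 f) = f(0,0) * f(1,1) - f(1,0) * f(0,1)"
  by (simp add: numeral_2_eq_2 det_mat_Suc)

lemma det3: "det (mat 3 3 f) = f(0,0) * (f(1,1) * f(2,2) - f(2,1) * f(1,2))
   - f(1,0) * (f(0,1) * f(2,2) - f(2,1) * f(0,2)) + f(2,0) * (f(0,1) * f(1,2) - f(1,1) * f(0,2))"
  by (simp add: numeral_3_eq_3 numeral_2_eq_2 det_mat_Suc algebra_simps)

lemma det4: "det (mat 4 4 f) =
   f(0,0) * det (mat 3 3 (\<lambda>(i,j). f (Suc i, Suc j)))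
 - f(1,0) * det (mat 3 3 (\<lambda>(i,j). f (if i = 0 then i else Suc i, Suc j)))
 + f(2,0) * det (mat 3 3 (\<lambda>(i,j). f (if i < 2 then i else Suc i, Suc j)))
 - f(3,0) * det (mat 3 3 (\<lambda>(i,j). f (if i < 3 then i else Suc i, Suc j)))"
proof -
  have "det (mat 4 4 f) = det (mat (Suc 3) (Suc 3) f)" by simp
  then show ?thesis unfolding det_mat_Suc by (simp add: lessThan_nat_numeral)
qed

lemma suc1: "Suc 0 = 1" by simp
lemma suc2: "Suc 1 = 2" by simp
lemma suc3: "Suc 2 = 3" by simp

lemma rank1_det4: fixes u v :: "nat \<Rightarrow> complex" shows "det (mat 4 4 (\<lambda>(i,j). (if i = j then k else 0) - u i * v j)) =
   k^3 * (k - (u 0 * v 0 + u 1 * v 1 + u 2 * v 2 + u 3 * v 3))" (is "?l = ?r")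
proof -
  have "?l = k^3 * (k - (u 0 * v 0 + u 1 * v 1 + u 2 * v 2 + u 3 * v 3))"
    apply (simp add: det4 det3)
    apply (simp only: suc1 suc2)
    by (simp add: algebra_simps power3_eq_cube power2_eq_square)
  then show ?thesis .
qed

lemma tensorA_det4: fixes s :: "nat \<Rightarrow> nat \<Rightarrow> complex" shows "det (mat 4 4 (\<lambda>(i,j). (if i = j then k else 0) - s (i mod 2) (j mod 2) * (b (i div 2) * c (j div 2)))) =
   k^2 * (k^2 - (s 0 0 + s 1 1) * (b 0 * c 0 + b 1 * c 1) * k + (s 0 0 * s 1 1 - s 0 1 * s 1 0) * (b 0 * c 0 + b 1 * c 1)^2)"
  apply (simp add: det4 det3)
  apply (simp only: suc1 suc2)
  by (simp add: algebra_simps power3_eq_cube power2_eq_square)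

lemma tensorB_det4: fixes s :: "nat \<Rightarrow> nat \<Rightarrow> complex" shows "det (mat 4 4 (\<lambda>(i,j). (if i = j then k else 0) - s (i div 2) (j div 2) * (b (i mod 2) * c (j mod 2)))) =
   k^2 * (k^2 - (s 0 0 + s 1 1) * (b 0 * c 0 + b 1 * c 1) * k + (s 0 0 * s 1 1 - s 0 1 * s 1 0) * (b 0 * c 0 + b 1 * c 1)^2)"
  apply (simp add: det4 det3)
  apply (simp only: suc1 suc2)
  by (simp add: algebra_simps power3_eq_cube power2_eq_square)

lemma quad_roots: "\<exists>r1 r2 :: complex. r1 + r2 = 1 \<and> r1 * r2 = d"
proof -
  define r where "r = (1 + csqrt (1 - 4*d)) / 2"
  have "r * (1 - r) = d"
  proof -
    have "r * (1 - r) = (1 - (csqrt (1 - 4*d))^2) / 4" unfolding r_def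
      by (simp add: field_simps power2_eq_square)
    also have "\<dots> = d" by simp
    finally show ?thesis .
  qed
  then show ?thesis by (intro exI[of _ r] exI[of _ "1 - r"]) simp
qed

lemma pe_rank1_2:
  fixes u v :: "nat \<Rightarrow> complex"
  assumes "A = mat 2 2 (\<lambda>(i,j). u i * v j)" "u 0 * v 0 + u 1 * v 1 = 1" "card S = 1"
  shows "passive_energy A (ham S) \<le> 0"
proof -
  have A: "A \<in> carrier_mat 2 2" using assms(1) by simp
  have "char_poly A = (\<Prod>r\<leftarrow>[0,1]. [:-r,1:])"
  proof (rule charpoly_eqI[OF A])
    fix k :: complex
    show "det (mat 2 2 (\<lambda>(i, j). (if i = j then k else 0) - A $$ (i, j))) = poly (\<Prod>r\<leftarrow>[0,1]. [:-r,1:]) k"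
      using assms(2) unfolding assms(1) det2
      by (simp add: algebra_simps power2_eq_square) (metis (no_types, lifting) mult.assoc mult.commute mult.right_neutral ring_class.ring_distribs(1))
  qed
  from pe2[OF _ this] show ?thesis using assms(1,3) by fastforce
qed

lemma pe_gen2:
  fixes A :: "complex mat"
  assumes A: "A \<in> carrier_mat 2 2" and tr: "A $$ (0,0) + A $$ (1,1) = 1" and "card S = 1"
  shows "passive_energy A (ham S) \<le> 1/2"
proof -
  obtain r1 r2 where r: "r1 + r2 = 1" "r1 * r2 = A $$ (0,0) * A $$ (1,1) - A $$ (1,0) * A $$ (0,1)"
    using quad_roots by blast
  have cp: "char_poly A = (\<Prod>r\<leftarrow>[r1,r2]. [:-r,1:])"
  proof (rule charpoly_eqI[OF A])
    fix k :: complex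
    have "k * k - k * (A $$ (0,0) + A $$ (1,1)) + A $$ (0,0) * A $$ (1,1) - A $$ (1,0) * A $$ (0,1)
        = k * k - k * (r1 + r2) + r1 * r2" using r tr by simp
    then show "det (mat 2 2 (\<lambda>(i, j). (if i = j then k else 0) - A $$ (i, j))) = poly (\<Prod>r\<leftarrow>[r1,r2]. [:-r,1:]) k"
      unfolding det2 by (simp add: algebra_simps)
  qed
  have d: "dim_row A = 2" using A by simp
  have "passive_energy A (ham S) \<le> Re r1" "passive_energy A (ham S) \<le> Re r2"
    using pe2[OF d cp _ assms(3), of r1] pe2[OF d cp _ assms(3), of r2] by auto
  moreover have "Re r1 + Re r2 = 1" using r(1) by (metis one_complex.simps(1) plus_complex.simps(1))
  ultimately show ?thesis by linarith
qed

lemma pe_rank1_4: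
  fixes u v :: "nat \<Rightarrow> complex"
  assumes "A = mat 4 4 (\<lambda>(i,j). u i * v j)" "u 0 * v 0 + u 1 * v 1 + u 2 * v 2 + u 3 * v 3 = 1" "card S = 2"
  shows "passive_energy A (ham S) \<le> 0"
proof -
  have A: "A \<in> carrier_mat 4 4" using assms(1) by simp
  have "char_poly A = (\<Prod>r\<leftarrow>[0,0,0,1]. [:-r,1:])"
  proof (rule charpoly_eqI[OF A])
    fix k :: complex
    have "det (mat 4 4 (\<lambda>(i, j). (if i = j then k else 0) - A $$ (i, j))) =
          det (mat 4 4 (\<lambda>(i, j). (if i = j then k else 0) - u i * v j))"
      unfolding assms(1) by (intro arg_cong[where f=det] eq_matI) auto
    also have "\<dots> = k^3 * (k - 1)" unfolding rank1_det4 assms(2) ..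
    finally show "det (mat 4 4 (\<lambda>(i, j). (if i = j then k else 0) - A $$ (i, j))) = poly (\<Prod>r\<leftarrow>[0,0,0,1]. [:-r,1:]) k"
      by (simp add: power3_eq_cube algebra_simps)
  qed
  from pe4[OF _ this _ assms(3), of 1 0] show ?thesis using assms(1) by simp
qed

lemma pe_tensor_aux:
  fixes A :: "complex mat"
  assumes A: "A \<in> carrier_mat 4 4" and "card S = 2"
   and det: "\<And>k. det (mat 4 4 (\<lambda>(i, j). (if i = j then k else 0) - A $$ (i, j))) = k^2 * (k^2 - k + d)"
  shows "passive_energy A (ham S) \<le> 1/2"
proof -
  obtain r1 r2 where r: "r1 + r2 = 1" "r1 * r2 = d"
    using quad_roots by blast
  have cp: "char_poly A = (\<Prod>r\<leftarrow>[0,0,r1,r2]. [:-r,1:])"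
  proof (rule charpoly_eqI[OF A])
    fix k :: complex
    have "k^2 * (k^2 - k + d) = k^2 * (k^2 - k * (r1 + r2) + r1 * r2)" using r by simp
    then show "det (mat 4 4 (\<lambda>(i, j). (if i = j then k else 0) - A $$ (i, j))) = poly (\<Prod>r\<leftarrow>[0,0,r1,r2]. [:-r,1:]) k"
      unfolding det by (simp add: algebra_simps power2_eq_square)
  qed
  have s: "Re r1 + Re r2 = 1" using r(1) by (metis one_complex.simps(1) plus_complex.simps(1))
  have "passive_energy A (ham S) \<le> 1 - Re r1 + 0" "passive_energy A (ham S) \<le> 1 - Re r2 + 0"
    using pe4[OF _ cp _ assms(2), of r1 0] pe4[OF _ cp _ assms(2), of r2 0] A s by auto
  then show ?thesis using s by linarith
qed

lemma pe_tensorA: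
  fixes s :: "nat \<Rightarrow> nat \<Rightarrow> complex"
  assumes "A = mat 4 4 (\<lambda>(i,j). s (i mod 2) (j mod 2) * (b (i div 2) * c (j div 2)))"
    "(s 0 0 + s 1 1) * (b 0 * c 0 + b 1 * c 1) = 1" "card S = 2"
  shows "passive_energy A (ham S) \<le> 1/2"
proof (rule pe_tensor_aux[OF _ assms(3)])
  show "A \<in> carrier_mat 4 4" using assms(1) by simp
  fix k :: complex
  have "det (mat 4 4 (\<lambda>(i, j). (if i = j then k else 0) - A $$ (i, j))) =
        det (mat 4 4 (\<lambda>(i,j). (if i = j then k else 0) - s (i mod 2) (j mod 2) * (b (i div 2) * c (j div 2))))"
    unfolding assms(1) by (intro arg_cong[where f=det] eq_matI) auto
  also have "\<dots> = k^2 * (k^2 - k + (s 0 0 * s 1 1 - s 0 1 * s 1 0) * (b 0 * c 0 + b 1 * c 1)^2)"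
    unfolding tensorA_det4 assms(2) by simp
  finally show "det (mat 4 4 (\<lambda>(i, j). (if i = j then k else 0) - A $$ (i, j))) =
     k^2 * (k^2 - k + (s 0 0 * s 1 1 - s 0 1 * s 1 0) * (b 0 * c 0 + b 1 * c 1)^2)" .
qed

lemma pe_tensorB:
  fixes s :: "nat \<Rightarrow> nat \<Rightarrow> complex"
  assumes "A = mat 4 4 (\<lambda>(i,j). s (i div 2) (j div 2) * (b (i mod 2) * c (j mod 2)))"
    "(s 0 0 + s 1 1) * (b 0 * c 0 + b 1 * c 1) = 1" "card S = 2"
  shows "passive_energy A (ham S) \<le> 1/2"
proof (rule pe_tensor_aux[OF _ assms(3)])
  show "A \<in> carrier_mat 4 4" using assms(1) by simp
  fix k :: complex
  have "det (mat 4 4 (\<lambda>(i, j). (if i = j then k else 0) - A $$ (i, j))) =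
        det (mat 4 4 (\<lambda>(i,j). (if i = j then k else 0) - s (i div 2) (j div 2) * (b (i mod 2) * c (j mod 2))))"
    unfolding assms(1) by (intro arg_cong[where f=det] eq_matI) auto
  also have "\<dots> = k^2 * (k^2 - k + (s 0 0 * s 1 1 - s 0 1 * s 1 0) * (b 0 * c 0 + b 1 * c 1)^2)"
    unfolding tensorB_det4 assms(2) by simp
  finally show "det (mat 4 4 (\<lambda>(i, j). (if i = j then k else 0) - A $$ (i, j))) =
     k^2 * (k^2 - k + (s 0 0 * s 1 1 - s 0 1 * s 1 0) * (b 0 * c 0 + b 1 * c 1)^2)" .
qed

lemma sub1: "sub_index {a} k = (if bitq k a then 1 else 0)"
  unfolding sub_index_def by simp

lemma sub2: "a < b \<Longrightarrow> sub_index {a,b} k = (if bitq k a then 1 else 0) + (if bitq k b then 2 else 0)"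
  unfolding sub_index_def by (simp add: lessThan_nat_numeral)

lemma qs: "qubits - {0} = {1,2}" "qubits - {1} = {0,2}" "qubits - {2} = {0,1}"
  "qubits - {0,1} = {2}" "qubits - {0,2} = {1}" "qubits - {1,2} = {0}"
  unfolding qubits_def by auto

lemma sub_tab: "sub_index {0} k = (if bitq k 0 then 1 else 0)"
  "sub_index {1} k = (if bitq k 1 then 1 else 0)"
  "sub_index {2} k = (if bitq k 2 then 1 else 0)"
  "sub_index {0,1} k = (if bitq k 0 then 1 else 0) + (if bitq k 1 then 2 else 0)"
  "sub_index {0,2} k = (if bitq k 0 then 1 else 0) + (if bitq k 2 then 2 else 0)"
  "sub_index {1,2} k = (if bitq k 1 then 1 else 0) + (if bitq k 2 then 2 else 0)"
  by (simp_all add: sub1 sub2)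

lemma sum_filter8: "(\<Sum>k\<in>{k::nat. k < 8 \<and> P k}. f k) = (\<Sum>k<8. if P k then f k else (0::complex))"
proof -
  have "{k. k < 8 \<and> P k} = {k \<in> {..<8}. P k}" by auto
  then show ?thesis using sum.inter_filter[of "{..<8::nat}" f P] by simp
qed

lemma red_entry: "i < 2^card S \<Longrightarrow> j < 2^card S \<Longrightarrow> reduced \<psi> S $$ (i,j) =
  (\<Sum>k<8. \<Sum>l<8. if sub_index S k = i \<and> sub_index S l = j \<and> sub_index (qubits - S) l = sub_index (qubits - S) k
     then \<psi> $ k * cnj (\<psi> $ l) else 0)"
proof -
  assume ij: "i < 2^card S" "j < 2^card S"
  have "reduced \<psi> S $$ (i,j) = (\<Sum>k\<in>{k. k < 8 \<and> sub_index S k = i}.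
       \<Sum>l\<in>{l. l < 8 \<and> sub_index S l = j \<and> sub_index (qubits - S) l = sub_index (qubits - S) k}.
         \<psi> $ k * cnj (\<psi> $ l))" unfolding reduced_def using ij by simp
  also have "\<dots> = (\<Sum>k<8. if sub_index S k = i then (\<Sum>l<8. if sub_index S l = j \<and> sub_index (qubits - S) l = sub_index (qubits - S) k then
         \<psi> $ k * cnj (\<psi> $ l) else 0) else 0)"
    by (simp only: sum_filter8)
  also have "\<dots> = (\<Sum>k<8. \<Sum>l<8. if sub_index S k = i \<and> sub_index S l = j \<and> sub_index (qubits - S) l = sub_index (qubits - S) k
     then \<psi> $ k * cnj (\<psi> $ l) else 0)"
    by (rule sum.cong[OF refl]) auto
  finally show ?thesis .
qed

lemma sub_vals:
  "sub_index {0} 0 = 0"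
  "sub_index {0} 1 = 1"
  "sub_index {0} 2 = 0"
  "sub_index {0} 3 = 1"
  "sub_index {0} 4 = 0"
  "sub_index {0} 5 = 1"
  "sub_index {0} 6 = 0"
  "sub_index {0} 7 = 1"
  "sub_index {1} 0 = 0"
  "sub_index {1} 1 = 0"
  "sub_index {1} 2 = 1"
  "sub_index {1} 3 = 1"
  "sub_index {1} 4 = 0"
  "sub_index {1} 5 = 0"
  "sub_index {1} 6 = 1"
  "sub_index {1} 7 = 1"
  "sub_index {2} 0 = 0"
  "sub_index {2} 1 = 0"
  "sub_index {2} 2 = 0"
  "sub_index {2} 3 = 0"
  "sub_index {2} 4 = 1"
  "sub_index {2} 5 = 1"
  "sub_index {2} 6 = 1"
  "sub_index {2} 7 = 1"
  "sub_index {0,1} 0 = 0"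
  "sub_index {0,1} 1 = 1"
  "sub_index {0,1} 2 = 2"
  "sub_index {0,1} 3 = 3"
  "sub_index {0,1} 4 = 0"
  "sub_index {0,1} 5 = 1"
  "sub_index {0,1} 6 = 2"
  "sub_index {0,1} 7 = 3"
  "sub_index {0,2} 0 = 0"
  "sub_index {0,2} 1 = 1"
  "sub_index {0,2} 2 = 0"
  "sub_index {0,2} 3 = 1"
  "sub_index {0,2} 4 = 2"
  "sub_index {0,2} 5 = 3"
  "sub_index {0,2} 6 = 2"
  "sub_index {0,2} 7 = 3"
  "sub_index {1,2} 0 = 0"
  "sub_index {1,2} 1 = 0"
  "sub_index {1,2} 2 = 1"
  "sub_index {1,2} 3 = 1"
  "sub_index {1,2} 4 = 2"
  "sub_index {1,2} 5 = 2"
  "sub_index {1,2} 6 = 3"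
  "sub_index {1,2} 7 = 3"
  by (simp_all add: sub1 sub2 bitq_def)

declare One_nat_def [simp del]

lemma sum8: "(\<Sum>k::nat<8. f k) = f 0 + f 1 + f 2 + f 3 + f 4 + f 5 + f 6 + (f 7 :: complex)"
proof -
  have "{..<8::nat} = {0,1,2,3,4,5,6,7}" by auto
  then show ?thesis by (simp add: algebra_simps)
qed

lemma less4: "(i::nat) < 4 \<longleftrightarrow> i = 0 \<or> i = 1 \<or> i = 2 \<or> i = 3" by auto
lemma less2: "(i::nat) < 2 \<longleftrightarrow> i = 0 \<or> i = 1" by auto

lemma caseZ2:
  fixes \<psi> :: "complex vec" and \<phi> \<chi> :: "nat \<Rightarrow> complex"
  assumes norm: "(\<Sum>k<8. \<psi>$k * cnj (\<psi>$k)) = 1"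
    and prod: "\<forall>k<8. \<psi> $ k = \<phi> (sub_index (qubits - {2}) k) * \<chi> (sub_index {2} k)"
  shows "passive_energy (reduced \<psi> {0}) (ham {0}) + passive_energy (reduced \<psi> {1}) (ham {1})
    + passive_energy (reduced \<psi> {2}) (ham {2}) + passive_energy (reduced \<psi> {0,1}) (ham {0,1})
    + passive_energy (reduced \<psi> {0,2}) (ham {0,2}) + passive_energy (reduced \<psi> {1,2}) (ham {1,2}) \<le> 2"
proof -
  have psi: "\<psi>$0 = \<phi> 0 * \<chi> 0" "\<psi>$1 = \<phi> 1 * \<chi> 0" "\<psi>$2 = \<phi> 2 * \<chi> 0" "\<psi>$3 = \<phi> 3 * \<chi> 0" "\<psi>$4 = \<phi> 0 * \<chi> 1" "\<psi>$5 = \<phi> 1 * \<chi> 1" "\<psi>$6 = \<phi> 2 * \<chi> 1" "\<psi>$7 = \<phi> 3 * \<chi> 1"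
    using prod[rule_format, of 0] prod[rule_format, of 1] prod[rule_format, of 2] prod[rule_format, of 3] prod[rule_format, of 4] prod[rule_format, of 5] prod[rule_format, of 6] prod[rule_format, of 7]
    unfolding qs sub_vals by simp_all
  define Nf where "Nf = \<phi> 0 * cnj (\<phi> 0) + \<phi> 1 * cnj (\<phi> 1) + \<phi> 2 * cnj (\<phi> 2) + \<phi> 3 * cnj (\<phi> 3)"
  define Nc where "Nc = \<chi> 0 * cnj (\<chi> 0) + \<chi> 1 * cnj (\<chi> 1)"
  have NN: "Nf * Nc = 1"
  proof -
    have "Nf * Nc = (\<Sum>k<8. \<psi>$k * cnj (\<psi>$k))"
      by (simp add: sum8 psi Nf_def Nc_def algebra_simps)
    then show ?thesis using norm by simp
  qed
  have c1: "card {a::nat} = 1" for a by simp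
  have c2: "card {0::nat,1} = 2" "card {0::nat,2} = 2" "card {1::nat,2} = 2" by simp_all
  have E0: "passive_energy (reduced \<psi> {0}) (ham {0}) \<le> 1/2"
  proof (rule pe_gen2[OF _ _ c1])
    show "reduced \<psi> {0} \<in> carrier_mat 2 2" by (simp add: reduced_def)
    have "reduced \<psi> {0} $$ (0,0) + reduced \<psi> {0} $$ (1,1) = (\<Sum>k<8. \<psi>$k * cnj (\<psi>$k))"
      by (simp add: red_entry qs sub1 sub2 bitq_def sum8 algebra_simps)
    then show "reduced \<psi> {0} $$ (0,0) + reduced \<psi> {0} $$ (1,1) = 1" using norm by simp
  qed
  have E1: "passive_energy (reduced \<psi> {1}) (ham {1}) \<le> 1/2"
  proof (rule pe_gen2[OF _ _ c1])
    show "reduced \<psi> {1} \<in> carrier_mat 2 2" by (simp add: reduced_def)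
    have "reduced \<psi> {1} $$ (0,0) + reduced \<psi> {1} $$ (1,1) = (\<Sum>k<8. \<psi>$k * cnj (\<psi>$k))"
      by (simp add: red_entry qs sub1 sub2 bitq_def sum8 algebra_simps)
    then show "reduced \<psi> {1} $$ (0,0) + reduced \<psi> {1} $$ (1,1) = 1" using norm by simp
  qed
  have E2: "passive_energy (reduced \<psi> {2}) (ham {2}) \<le> 0"
  proof (rule pe_rank1_2[OF _ _ c1])
    show "reduced \<psi> {2} = mat 2 2 (\<lambda>(i,j). \<chi> i * (cnj (\<chi> j) * Nf))"
    proof (rule eq_matI)
      fix i j assume "i < dim_row (mat 2 2 (\<lambda>(i,j). \<chi> i * (cnj (\<chi> j) * Nf)))" "j < dim_col (mat 2 2 (\<lambda>(i,j). \<chi> i * (cnj (\<chi> j) * Nf)))"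
      then have "i < 2" "j < 2" by simp_all
      then show "reduced \<psi> {2} $$ (i,j) = (mat 2 2 (\<lambda>(i,j). \<chi> i * (cnj (\<chi> j) * Nf))) $$ (i,j)"
        unfolding less2
        by (elim disjE; simp add: red_entry qs sub1 sub2 bitq_def sum8 psi Nf_def algebra_simps)
    qed (simp_all add: reduced_def)
    show "\<chi> 0 * (cnj (\<chi> 0) * Nf) + \<chi> 1 * (cnj (\<chi> 1) * Nf) = 1"
      using NN unfolding Nc_def by (simp add: algebra_simps)
  qed
  have E01: "passive_energy (reduced \<psi> {0,1}) (ham {0,1}) \<le> 0"
  proof (rule pe_rank1_4[OF _ _ c2(1)])
    show "reduced \<psi> {0,1} = mat 4 4 (\<lambda>(i,j). \<phi> i * (cnj (\<phi> j) * Nc))"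
    proof (rule eq_matI)
      fix i j assume "i < dim_row (mat 4 4 (\<lambda>(i,j). \<phi> i * (cnj (\<phi> j) * Nc)))" "j < dim_col (mat 4 4 (\<lambda>(i,j). \<phi> i * (cnj (\<phi> j) * Nc)))"
      then have "i < 4" "j < 4" by simp_all
      then show "reduced \<psi> {0,1} $$ (i,j) = (mat 4 4 (\<lambda>(i,j). \<phi> i * (cnj (\<phi> j) * Nc))) $$ (i,j)"
        unfolding less4
        by (elim disjE; simp add: red_entry qs sub1 sub2 bitq_def sum8 psi Nc_def algebra_simps)
    qed (simp_all add: reduced_def)
    show "\<phi> 0 * (cnj (\<phi> 0) * Nc) + \<phi> 1 * (cnj (\<phi> 1) * Nc) + \<phi> 2 * (cnj (\<phi> 2) * Nc) + \<phi> 3 * (cnj (\<phi> 3) * Nc) = 1"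
      using NN unfolding Nf_def by (simp add: algebra_simps)
  qed
  define sE02 :: "nat \<Rightarrow> nat \<Rightarrow> complex" where "sE02 = (\<lambda>x x'. \<phi> (if x = 0 then 0 else 1) * cnj (\<phi> (if x' = 0 then 0 else 1)) + \<phi> (if x = 0 then 2 else 3) * cnj (\<phi> (if x' = 0 then 2 else 3)))"
  have E02: "passive_energy (reduced \<psi> {0,2}) (ham {0,2}) \<le> 1/2"
  proof (rule pe_tensorA[where s=sE02 and b=\<chi> and c="\<lambda>z. cnj (\<chi> z)", OF _ _ c2(2)])
    show "reduced \<psi> {0,2} = mat 4 4 (\<lambda>(i,j). sE02 (i mod 2) (j mod 2) * (\<chi> (i div 2) * cnj (\<chi> (j div 2))))"
    proof (rule eq_matI)
      fix i j assume "i < dim_row (mat 4 4 (\<lambda>(i,j). sE02 (i mod 2) (j mod 2) * (\<chi> (i div 2) * cnj (\<chi> (j div 2)))))" "j < dim_col (mat 4 4 (\<lambda>(i,j). sE02 (i mod 2) (j mod 2) * (\<chi> (i div 2) * cnj (\<chi> (j div 2)))))"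
      then have "i < 4" "j < 4" by simp_all
      then show "reduced \<psi> {0,2} $$ (i,j) = (mat 4 4 (\<lambda>(i,j). sE02 (i mod 2) (j mod 2) * (\<chi> (i div 2) * cnj (\<chi> (j div 2))))) $$ (i,j)"
        unfolding less4
        by (elim disjE; simp add: red_entry qs sub1 sub2 bitq_def sum8 psi sE02_def Nf_def Nc_def algebra_simps)
    qed (simp_all add: reduced_def)
    show "(sE02 0 0 + sE02 1 1) * (\<chi> 0 * cnj (\<chi> 0) + \<chi> 1 * cnj (\<chi> 1)) = 1"
      using NN unfolding sE02_def Nf_def Nc_def by (simp add: algebra_simps)
  qed
  define sE12 :: "nat \<Rightarrow> nat \<Rightarrow> complex" where "sE12 = (\<lambda>x x'. \<phi> (if x = 0 then 0 else 2) * cnj (\<phi> (if x' = 0 then 0 else 2)) + \<phi> (if x = 0 then 1 else 3) * cnj (\<phi> (if x' = 0 then 1 else 3)))"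
  have E12: "passive_energy (reduced \<psi> {1,2}) (ham {1,2}) \<le> 1/2"
  proof (rule pe_tensorA[where s=sE12 and b=\<chi> and c="\<lambda>z. cnj (\<chi> z)", OF _ _ c2(3)])
    show "reduced \<psi> {1,2} = mat 4 4 (\<lambda>(i,j). sE12 (i mod 2) (j mod 2) * (\<chi> (i div 2) * cnj (\<chi> (j div 2))))"
    proof (rule eq_matI)
      fix i j assume "i < dim_row (mat 4 4 (\<lambda>(i,j). sE12 (i mod 2) (j mod 2) * (\<chi> (i div 2) * cnj (\<chi> (j div 2)))))" "j < dim_col (mat 4 4 (\<lambda>(i,j). sE12 (i mod 2) (j mod 2) * (\<chi> (i div 2) * cnj (\<chi> (j div 2)))))"
      then have "i < 4" "j < 4" by simp_all
      then show "reduced \<psi> {1,2} $$ (i,j) = (mat 4 4 (\<lambda>(i,j). sE12 (i mod 2) (j mod 2) * (\<chi> (i div 2) * cnj (\<chi> (j div 2))))) $$ (i,j)"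
        unfolding less4
        by (elim disjE; simp add: red_entry qs sub1 sub2 bitq_def sum8 psi sE12_def Nf_def Nc_def algebra_simps)
    qed (simp_all add: reduced_def)
    show "(sE12 0 0 + sE12 1 1) * (\<chi> 0 * cnj (\<chi> 0) + \<chi> 1 * cnj (\<chi> 1)) = 1"
      using NN unfolding sE12_def Nf_def Nc_def by (simp add: algebra_simps)
  qed
  show ?thesis using E0 E1 E2 E01 E02 E12 by linarith
qed

lemma caseZ1:
  fixes \<psi> :: "complex vec" and \<phi> \<chi> :: "nat \<Rightarrow> complex"
  assumes norm: "(\<Sum>k<8. \<psi>$k * cnj (\<psi>$k)) = 1"
    and prod: "\<forall>k<8. \<psi> $ k = \<phi> (sub_index (qubits - {1}) k) * \<chi> (sub_index {1} k)"
  shows "passive_energy (reduced \<psi> {0}) (ham {0}) + passive_energy (reduced \<psi> {1}) (ham {1})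
    + passive_energy (reduced \<psi> {2}) (ham {2}) + passive_energy (reduced \<psi> {0,1}) (ham {0,1})
    + passive_energy (reduced \<psi> {0,2}) (ham {0,2}) + passive_energy (reduced \<psi> {1,2}) (ham {1,2}) \<le> 2"
proof -
  have psi: "\<psi>$0 = \<phi> 0 * \<chi> 0" "\<psi>$1 = \<phi> 1 * \<chi> 0" "\<psi>$2 = \<phi> 0 * \<chi> 1" "\<psi>$3 = \<phi> 1 * \<chi> 1" "\<psi>$4 = \<phi> 2 * \<chi> 0" "\<psi>$5 = \<phi> 3 * \<chi> 0" "\<psi>$6 = \<phi> 2 * \<chi> 1" "\<psi>$7 = \<phi> 3 * \<chi> 1"
    using prod[rule_format, of 0] prod[rule_format, of 1] prod[rule_format, of 2] prod[rule_format, of 3] prod[rule_format, of 4] prod[rule_format, of 5] prod[rule_format, of 6] prod[rule_format, of 7]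
    unfolding qs sub_vals by simp_all
  define Nf where "Nf = \<phi> 0 * cnj (\<phi> 0) + \<phi> 1 * cnj (\<phi> 1) + \<phi> 2 * cnj (\<phi> 2) + \<phi> 3 * cnj (\<phi> 3)"
  define Nc where "Nc = \<chi> 0 * cnj (\<chi> 0) + \<chi> 1 * cnj (\<chi> 1)"
  have NN: "Nf * Nc = 1"
  proof -
    have "Nf * Nc = (\<Sum>k<8. \<psi>$k * cnj (\<psi>$k))"
      by (simp add: sum8 psi Nf_def Nc_def algebra_simps)
    then show ?thesis using norm by simp
  qed
  have c1: "card {a::nat} = 1" for a by simp
  have c2: "card {0::nat,1} = 2" "card {0::nat,2} = 2" "card {1::nat,2} = 2" by simp_all
  have E0: "passive_energy (reduced \<psi> {0}) (ham {0}) \<le> 1/2"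
  proof (rule pe_gen2[OF _ _ c1])
    show "reduced \<psi> {0} \<in> carrier_mat 2 2" by (simp add: reduced_def)
    have "reduced \<psi> {0} $$ (0,0) + reduced \<psi> {0} $$ (1,1) = (\<Sum>k<8. \<psi>$k * cnj (\<psi>$k))"
      by (simp add: red_entry qs sub1 sub2 bitq_def sum8 algebra_simps)
    then show "reduced \<psi> {0} $$ (0,0) + reduced \<psi> {0} $$ (1,1) = 1" using norm by simp
  qed
  have E2: "passive_energy (reduced \<psi> {2}) (ham {2}) \<le> 1/2"
  proof (rule pe_gen2[OF _ _ c1])
    show "reduced \<psi> {2} \<in> carrier_mat 2 2" by (simp add: reduced_def)
    have "reduced \<psi> {2} $$ (0,0) + reduced \<psi> {2} $$ (1,1) = (\<Sum>k<8. \<psi>$k * cnj (\<psi>$k))"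
      by (simp add: red_entry qs sub1 sub2 bitq_def sum8 algebra_simps)
    then show "reduced \<psi> {2} $$ (0,0) + reduced \<psi> {2} $$ (1,1) = 1" using norm by simp
  qed
  have E1: "passive_energy (reduced \<psi> {1}) (ham {1}) \<le> 0"
  proof (rule pe_rank1_2[OF _ _ c1])
    show "reduced \<psi> {1} = mat 2 2 (\<lambda>(i,j). \<chi> i * (cnj (\<chi> j) * Nf))"
    proof (rule eq_matI)
      fix i j assume "i < dim_row (mat 2 2 (\<lambda>(i,j). \<chi> i * (cnj (\<chi> j) * Nf)))" "j < dim_col (mat 2 2 (\<lambda>(i,j). \<chi> i * (cnj (\<chi> j) * Nf)))"
      then have "i < 2" "j < 2" by simp_all
      then show "reduced \<psi> {1} $$ (i,j) = (mat 2 2 (\<lambda>(i,j). \<chi> i * (cnj (\<chi> j) * Nf))) $$ (i,j)"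
        unfolding less2
        by (elim disjE; simp add: red_entry qs sub1 sub2 bitq_def sum8 psi Nf_def algebra_simps)
    qed (simp_all add: reduced_def)
    show "\<chi> 0 * (cnj (\<chi> 0) * Nf) + \<chi> 1 * (cnj (\<chi> 1) * Nf) = 1"
      using NN unfolding Nc_def by (simp add: algebra_simps)
  qed
  have E02: "passive_energy (reduced \<psi> {0,2}) (ham {0,2}) \<le> 0"
  proof (rule pe_rank1_4[OF _ _ c2(2)])
    show "reduced \<psi> {0,2} = mat 4 4 (\<lambda>(i,j). \<phi> i * (cnj (\<phi> j) * Nc))"
    proof (rule eq_matI)
      fix i j assume "i < dim_row (mat 4 4 (\<lambda>(i,j). \<phi> i * (cnj (\<phi> j) * Nc)))" "j < dim_col (mat 4 4 (\<lambda>(i,j). \<phi> i * (cnj (\<phi> j) * Nc)))"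
      then have "i < 4" "j < 4" by simp_all
      then show "reduced \<psi> {0,2} $$ (i,j) = (mat 4 4 (\<lambda>(i,j). \<phi> i * (cnj (\<phi> j) * Nc))) $$ (i,j)"
        unfolding less4
        by (elim disjE; simp add: red_entry qs sub1 sub2 bitq_def sum8 psi Nc_def algebra_simps)
    qed (simp_all add: reduced_def)
    show "\<phi> 0 * (cnj (\<phi> 0) * Nc) + \<phi> 1 * (cnj (\<phi> 1) * Nc) + \<phi> 2 * (cnj (\<phi> 2) * Nc) + \<phi> 3 * (cnj (\<phi> 3) * Nc) = 1"
      using NN unfolding Nf_def by (simp add: algebra_simps)
  qed
  define sE01 :: "nat \<Rightarrow> nat \<Rightarrow> complex" where "sE01 = (\<lambda>x x'. \<phi> (if x = 0 then 0 else 1) * cnj (\<phi> (if x' = 0 then 0 else 1)) + \<phi> (if x = 0 then 2 else 3) * cnj (\<phi> (if x' = 0 then 2 else 3)))"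
  have E01: "passive_energy (reduced \<psi> {0,1}) (ham {0,1}) \<le> 1/2"
  proof (rule pe_tensorA[where s=sE01 and b=\<chi> and c="\<lambda>z. cnj (\<chi> z)", OF _ _ c2(1)])
    show "reduced \<psi> {0,1} = mat 4 4 (\<lambda>(i,j). sE01 (i mod 2) (j mod 2) * (\<chi> (i div 2) * cnj (\<chi> (j div 2))))"
    proof (rule eq_matI)
      fix i j assume "i < dim_row (mat 4 4 (\<lambda>(i,j). sE01 (i mod 2) (j mod 2) * (\<chi> (i div 2) * cnj (\<chi> (j div 2)))))" "j < dim_col (mat 4 4 (\<lambda>(i,j). sE01 (i mod 2) (j mod 2) * (\<chi> (i div 2) * cnj (\<chi> (j div 2)))))"
      then have "i < 4" "j < 4" by simp_all
      then show "reduced \<psi> {0,1} $$ (i,j) = (mat 4 4 (\<lambda>(i,j). sE01 (i mod 2) (j mod 2) * (\<chi> (i div 2) * cnj (\<chi> (j div 2))))) $$ (i,j)"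
        unfolding less4
        by (elim disjE; simp add: red_entry qs sub1 sub2 bitq_def sum8 psi sE01_def Nf_def Nc_def algebra_simps)
    qed (simp_all add: reduced_def)
    show "(sE01 0 0 + sE01 1 1) * (\<chi> 0 * cnj (\<chi> 0) + \<chi> 1 * cnj (\<chi> 1)) = 1"
      using NN unfolding sE01_def Nf_def Nc_def by (simp add: algebra_simps)
  qed
  define sE12 :: "nat \<Rightarrow> nat \<Rightarrow> complex" where "sE12 = (\<lambda>x x'. \<phi> (if x = 0 then 0 else 2) * cnj (\<phi> (if x' = 0 then 0 else 2)) + \<phi> (if x = 0 then 1 else 3) * cnj (\<phi> (if x' = 0 then 1 else 3)))"
  have E12: "passive_energy (reduced \<psi> {1,2}) (ham {1,2}) \<le> 1/2"
  proof (rule pe_tensorB[where s=sE12 and b=\<chi> and c="\<lambda>z. cnj (\<chi> z)", OF _ _ c2(3)])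
    show "reduced \<psi> {1,2} = mat 4 4 (\<lambda>(i,j). sE12 (i div 2) (j div 2) * (\<chi> (i mod 2) * cnj (\<chi> (j mod 2))))"
    proof (rule eq_matI)
      fix i j assume "i < dim_row (mat 4 4 (\<lambda>(i,j). sE12 (i div 2) (j div 2) * (\<chi> (i mod 2) * cnj (\<chi> (j mod 2)))))" "j < dim_col (mat 4 4 (\<lambda>(i,j). sE12 (i div 2) (j div 2) * (\<chi> (i mod 2) * cnj (\<chi> (j mod 2)))))"
      then have "i < 4" "j < 4" by simp_all
      then show "reduced \<psi> {1,2} $$ (i,j) = (mat 4 4 (\<lambda>(i,j). sE12 (i div 2) (j div 2) * (\<chi> (i mod 2) * cnj (\<chi> (j mod 2))))) $$ (i,j)"
        unfolding less4
        by (elim disjE; simp add: red_entry qs sub1 sub2 bitq_def sum8 psi sE12_def Nf_def Nc_def algebra_simps)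
    qed (simp_all add: reduced_def)
    show "(sE12 0 0 + sE12 1 1) * (\<chi> 0 * cnj (\<chi> 0) + \<chi> 1 * cnj (\<chi> 1)) = 1"
      using NN unfolding sE12_def Nf_def Nc_def by (simp add: algebra_simps)
  qed
  show ?thesis using E0 E2 E1 E02 E01 E12 by linarith
qed

lemma caseZ0:
  fixes \<psi> :: "complex vec" and \<phi> \<chi> :: "nat \<Rightarrow> complex"
  assumes norm: "(\<Sum>k<8. \<psi>$k * cnj (\<psi>$k)) = 1"
    and prod: "\<forall>k<8. \<psi> $ k = \<phi> (sub_index (qubits - {0}) k) * \<chi> (sub_index {0} k)"
  shows "passive_energy (reduced \<psi> {0}) (ham {0}) + passive_energy (reduced \<psi> {1}) (ham {1})
    + passive_energy (reduced \<psi> {2}) (ham {2}) + passive_energy (reduced \<psi> {0,1}) (ham {0,1})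
    + passive_energy (reduced \<psi> {0,2}) (ham {0,2}) + passive_energy (reduced \<psi> {1,2}) (ham {1,2}) \<le> 2"
proof -
  have psi: "\<psi>$0 = \<phi> 0 * \<chi> 0" "\<psi>$1 = \<phi> 0 * \<chi> 1" "\<psi>$2 = \<phi> 1 * \<chi> 0" "\<psi>$3 = \<phi> 1 * \<chi> 1" "\<psi>$4 = \<phi> 2 * \<chi> 0" "\<psi>$5 = \<phi> 2 * \<chi> 1" "\<psi>$6 = \<phi> 3 * \<chi> 0" "\<psi>$7 = \<phi> 3 * \<chi> 1"
    using prod[rule_format, of 0] prod[rule_format, of 1] prod[rule_format, of 2] prod[rule_format, of 3] prod[rule_format, of 4] prod[rule_format, of 5] prod[rule_format, of 6] prod[rule_format, of 7]
    unfolding qs sub_vals by simp_all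
  define Nf where "Nf = \<phi> 0 * cnj (\<phi> 0) + \<phi> 1 * cnj (\<phi> 1) + \<phi> 2 * cnj (\<phi> 2) + \<phi> 3 * cnj (\<phi> 3)"
  define Nc where "Nc = \<chi> 0 * cnj (\<chi> 0) + \<chi> 1 * cnj (\<chi> 1)"
  have NN: "Nf * Nc = 1"
  proof -
    have "Nf * Nc = (\<Sum>k<8. \<psi>$k * cnj (\<psi>$k))"
      by (simp add: sum8 psi Nf_def Nc_def algebra_simps)
    then show ?thesis using norm by simp
  qed
  have c1: "card {a::nat} = 1" for a by simp
  have c2: "card {0::nat,1} = 2" "card {0::nat,2} = 2" "card {1::nat,2} = 2" by simp_all
  have E1: "passive_energy (reduced \<psi> {1}) (ham {1}) \<le> 1/2"
  proof (rule pe_gen2[OF _ _ c1])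
    show "reduced \<psi> {1} \<in> carrier_mat 2 2" by (simp add: reduced_def)
    have "reduced \<psi> {1} $$ (0,0) + reduced \<psi> {1} $$ (1,1) = (\<Sum>k<8. \<psi>$k * cnj (\<psi>$k))"
      by (simp add: red_entry qs sub1 sub2 bitq_def sum8 algebra_simps)
    then show "reduced \<psi> {1} $$ (0,0) + reduced \<psi> {1} $$ (1,1) = 1" using norm by simp
  qed
  have E2: "passive_energy (reduced \<psi> {2}) (ham {2}) \<le> 1/2"
  proof (rule pe_gen2[OF _ _ c1])
    show "reduced \<psi> {2} \<in> carrier_mat 2 2" by (simp add: reduced_def)
    have "reduced \<psi> {2} $$ (0,0) + reduced \<psi> {2} $$ (1,1) = (\<Sum>k<8. \<psi>$k * cnj (\<psi>$k))"
      by (simp add: red_entry qs sub1 sub2 bitq_def sum8 algebra_simps)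
    then show "reduced \<psi> {2} $$ (0,0) + reduced \<psi> {2} $$ (1,1) = 1" using norm by simp
  qed
  have E0: "passive_energy (reduced \<psi> {0}) (ham {0}) \<le> 0"
  proof (rule pe_rank1_2[OF _ _ c1])
    show "reduced \<psi> {0} = mat 2 2 (\<lambda>(i,j). \<chi> i * (cnj (\<chi> j) * Nf))"
    proof (rule eq_matI)
      fix i j assume "i < dim_row (mat 2 2 (\<lambda>(i,j). \<chi> i * (cnj (\<chi> j) * Nf)))" "j < dim_col (mat 2 2 (\<lambda>(i,j). \<chi> i * (cnj (\<chi> j) * Nf)))"
      then have "i < 2" "j < 2" by simp_all
      then show "reduced \<psi> {0} $$ (i,j) = (mat 2 2 (\<lambda>(i,j). \<chi> i * (cnj (\<chi> j) * Nf))) $$ (i,j)"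
        unfolding less2
        by (elim disjE; simp add: red_entry qs sub1 sub2 bitq_def sum8 psi Nf_def algebra_simps)
    qed (simp_all add: reduced_def)
    show "\<chi> 0 * (cnj (\<chi> 0) * Nf) + \<chi> 1 * (cnj (\<chi> 1) * Nf) = 1"
      using NN unfolding Nc_def by (simp add: algebra_simps)
  qed
  have E12: "passive_energy (reduced \<psi> {1,2}) (ham {1,2}) \<le> 0"
  proof (rule pe_rank1_4[OF _ _ c2(3)])
    show "reduced \<psi> {1,2} = mat 4 4 (\<lambda>(i,j). \<phi> i * (cnj (\<phi> j) * Nc))"
    proof (rule eq_matI)
      fix i j assume "i < dim_row (mat 4 4 (\<lambda>(i,j). \<phi> i * (cnj (\<phi> j) * Nc)))" "j < dim_col (mat 4 4 (\<lambda>(i,j). \<phi> i * (cnj (\<phi> j) * Nc)))"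
      then have "i < 4" "j < 4" by simp_all
      then show "reduced \<psi> {1,2} $$ (i,j) = (mat 4 4 (\<lambda>(i,j). \<phi> i * (cnj (\<phi> j) * Nc))) $$ (i,j)"
        unfolding less4
        by (elim disjE; simp add: red_entry qs sub1 sub2 bitq_def sum8 psi Nc_def algebra_simps)
    qed (simp_all add: reduced_def)
    show "\<phi> 0 * (cnj (\<phi> 0) * Nc) + \<phi> 1 * (cnj (\<phi> 1) * Nc) + \<phi> 2 * (cnj (\<phi> 2) * Nc) + \<phi> 3 * (cnj (\<phi> 3) * Nc) = 1"
      using NN unfolding Nf_def by (simp add: algebra_simps)
  qed
  define sE01 :: "nat \<Rightarrow> nat \<Rightarrow> complex" where "sE01 = (\<lambda>x x'. \<phi> (if x = 0 then 0 else 1) * cnj (\<phi> (if x' = 0 then 0 else 1)) + \<phi> (if x = 0 then 2 else 3) * cnj (\<phi> (if x' = 0 then 2 else 3)))"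
  have E01: "passive_energy (reduced \<psi> {0,1}) (ham {0,1}) \<le> 1/2"
  proof (rule pe_tensorB[where s=sE01 and b=\<chi> and c="\<lambda>z. cnj (\<chi> z)", OF _ _ c2(1)])
    show "reduced \<psi> {0,1} = mat 4 4 (\<lambda>(i,j). sE01 (i div 2) (j div 2) * (\<chi> (i mod 2) * cnj (\<chi> (j mod 2))))"
    proof (rule eq_matI)
      fix i j assume "i < dim_row (mat 4 4 (\<lambda>(i,j). sE01 (i div 2) (j div 2) * (\<chi> (i mod 2) * cnj (\<chi> (j mod 2)))))" "j < dim_col (mat 4 4 (\<lambda>(i,j). sE01 (i div 2) (j div 2) * (\<chi> (i mod 2) * cnj (\<chi> (j mod 2)))))"
      then have "i < 4" "j < 4" by simp_all
      then show "reduced \<psi> {0,1} $$ (i,j) = (mat 4 4 (\<lambda>(i,j). sE01 (i div 2) (j div 2) * (\<chi> (i mod 2) * cnj (\<chi> (j mod 2))))) $$ (i,j)"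
        unfolding less4
        by (elim disjE; simp add: red_entry qs sub1 sub2 bitq_def sum8 psi sE01_def Nf_def Nc_def algebra_simps)
    qed (simp_all add: reduced_def)
    show "(sE01 0 0 + sE01 1 1) * (\<chi> 0 * cnj (\<chi> 0) + \<chi> 1 * cnj (\<chi> 1)) = 1"
      using NN unfolding sE01_def Nf_def Nc_def by (simp add: algebra_simps)
  qed
  define sE02 :: "nat \<Rightarrow> nat \<Rightarrow> complex" where "sE02 = (\<lambda>x x'. \<phi> (if x = 0 then 0 else 2) * cnj (\<phi> (if x' = 0 then 0 else 2)) + \<phi> (if x = 0 then 1 else 3) * cnj (\<phi> (if x' = 0 then 1 else 3)))"
  have E02: "passive_energy (reduced \<psi> {0,2}) (ham {0,2}) \<le> 1/2"
  proof (rule pe_tensorB[where s=sE02 and b=\<chi> and c="\<lambda>z. cnj (\<chi> z)", OF _ _ c2(2)])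
    show "reduced \<psi> {0,2} = mat 4 4 (\<lambda>(i,j). sE02 (i div 2) (j div 2) * (\<chi> (i mod 2) * cnj (\<chi> (j mod 2))))"
    proof (rule eq_matI)
      fix i j assume "i < dim_row (mat 4 4 (\<lambda>(i,j). sE02 (i div 2) (j div 2) * (\<chi> (i mod 2) * cnj (\<chi> (j mod 2)))))" "j < dim_col (mat 4 4 (\<lambda>(i,j). sE02 (i div 2) (j div 2) * (\<chi> (i mod 2) * cnj (\<chi> (j mod 2)))))"
      then have "i < 4" "j < 4" by simp_all
      then show "reduced \<psi> {0,2} $$ (i,j) = (mat 4 4 (\<lambda>(i,j). sE02 (i div 2) (j div 2) * (\<chi> (i mod 2) * cnj (\<chi> (j mod 2))))) $$ (i,j)"
        unfolding less4
        by (elim disjE; simp add: red_entry qs sub1 sub2 bitq_def sum8 psi sE02_def Nf_def Nc_def algebra_simps)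
    qed (simp_all add: reduced_def)
    show "(sE02 0 0 + sE02 1 1) * (\<chi> 0 * cnj (\<chi> 0) + \<chi> 1 * cnj (\<chi> 1)) = 1"
      using NN unfolding sE02_def Nf_def Nc_def by (simp add: algebra_simps)
  qed
  show ?thesis using E1 E2 E0 E12 E01 E02 by linarith
qed

lemma Pow_q: "Pow qubits = {{}, {0},{1},{2},{0,1},{0,2},{1,2},{0,1,2}}"
  unfolding qubits_def by (simp add: Pow_insert insert_commute)

lemma dist8: "distinct [{}, {0::nat},{1},{2},{0,1},{0,2},{1,2},{0,1,2}]"
proof -
  have "distinct (map (\<lambda>X. (0 \<in> X, 1 \<in> X, 2 \<in> X)) [{}, {0::nat},{1},{2},{0,1},{0,2},{1,2},{0,1,2}])"
    by simp
  then show ?thesis by (simp only: distinct_map)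
qed
lemma Delta_0: "Delta \<psi> {0} = passive_energy (reduced \<psi> {0}) (ham {0}) + passive_energy (reduced \<psi> {1,2}) (ham {1,2})"
proof -
  have "{0} \<noteq> qubits"
  proof
    assume "{0} = qubits"
    then have "((0::nat) \<in> {0}, (1::nat) \<in> {0}, (2::nat) \<in> {0}) = ((0::nat) \<in> qubits, (1::nat) \<in> qubits, (2::nat) \<in> qubits)" by simp
    then show False by (simp add: qubits_def)
  qed
  then show ?thesis unfolding Delta_def by (simp add: qs)
qed

lemma Delta_1: "Delta \<psi> {1} = passive_energy (reduced \<psi> {1}) (ham {1}) + passive_energy (reduced \<psi> {0,2}) (ham {0,2})"
proof -
  have "{1} \<noteq> qubits"
  proof
    assume "{1} = qubits"
    then have "((0::nat) \<in> {1}, (1::nat) \<in> {1}, (2::nat) \<in> {1}) = ((0::nat) \<in> qubits, (1::nat) \<in> qubits, (2::nat) \<in> qubits)" by simp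
    then show False by (simp add: qubits_def)
  qed
  then show ?thesis unfolding Delta_def by (simp add: qs)
qed

lemma Delta_2: "Delta \<psi> {2} = passive_energy (reduced \<psi> {2}) (ham {2}) + passive_energy (reduced \<psi> {0,1}) (ham {0,1})"
proof -
  have "{2} \<noteq> qubits"
  proof
    assume "{2} = qubits"
    then have "((0::nat) \<in> {2}, (1::nat) \<in> {2}, (2::nat) \<in> {2}) = ((0::nat) \<in> qubits, (1::nat) \<in> qubits, (2::nat) \<in> qubits)" by simp
    then show False by (simp add: qubits_def)
  qed
  then show ?thesis unfolding Delta_def by (simp add: qs)
qed

lemma Delta_01: "Delta \<psi> {0,1} = passive_energy (reduced \<psi> {0,1}) (ham {0,1}) + passive_energy (reduced \<psi> {2}) (ham {2})"
proof -
  have "{0,1} \<noteq> qubits"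
  proof
    assume "{0,1} = qubits"
    then have "((0::nat) \<in> {0,1}, (1::nat) \<in> {0,1}, (2::nat) \<in> {0,1}) = ((0::nat) \<in> qubits, (1::nat) \<in> qubits, (2::nat) \<in> qubits)" by simp
    then show False by (simp add: qubits_def)
  qed
  then show ?thesis unfolding Delta_def by (simp add: qs)
qed

lemma Delta_02: "Delta \<psi> {0,2} = passive_energy (reduced \<psi> {0,2}) (ham {0,2}) + passive_energy (reduced \<psi> {1}) (ham {1})"
proof -
  have "{0,2} \<noteq> qubits"
  proof
    assume "{0,2} = qubits"
    then have "((0::nat) \<in> {0,2}, (1::nat) \<in> {0,2}, (2::nat) \<in> {0,2}) = ((0::nat) \<in> qubits, (1::nat) \<in> qubits, (2::nat) \<in> qubits)" by simp
    then show False by (simp add: qubits_def)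
  qed
  then show ?thesis unfolding Delta_def by (simp add: qs)
qed

lemma Delta_12: "Delta \<psi> {1,2} = passive_energy (reduced \<psi> {1,2}) (ham {1,2}) + passive_energy (reduced \<psi> {0}) (ham {0})"
proof -
  have "{1,2} \<noteq> qubits"
  proof
    assume "{1,2} = qubits"
    then have "((0::nat) \<in> {1,2}, (1::nat) \<in> {1,2}, (2::nat) \<in> {1,2}) = ((0::nat) \<in> qubits, (1::nat) \<in> qubits, (2::nat) \<in> qubits)" by simp
    then show False by (simp add: qubits_def)
  qed
  then show ?thesis unfolding Delta_def by (simp add: qs)
qed


lemma sumME: "(\<Sum>X\<in>Pow qubits. Delta \<psi> X) = 2 * (passive_energy (reduced \<psi> {0}) (ham {0}) + passive_energy (reduced \<psi> {1}) (ham {1}) + passive_energy (reduced \<psi> {2}) (ham {2}) + passive_energy (reduced \<psi> {0,1}) (ham {0,1}) + passive_energy (reduced \<psi> {0,2}) (ham {0,2}) + passive_energy (reduced \<psi> {1,2}) (ham {1,2}))"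
proof -
  have "(\<Sum>X\<in>Pow qubits. Delta \<psi> X) = sum_list (map (Delta \<psi>) [{}, {0::nat},{1},{2},{0,1},{0,2},{1,2},{0,1,2}])"
    unfolding Pow_q using sum.distinct_set_conv_list[OF dist8, of "Delta \<psi>"] by simp
  also have "\<dots> = Delta \<psi> {} + Delta \<psi> {0} + Delta \<psi> {1} + Delta \<psi> {2} + Delta \<psi> {0,1} + Delta \<psi> {0,2} + Delta \<psi> {1,2} + Delta \<psi> {0,1,2}"
    by (simp add: algebra_simps)
  also have "Delta \<psi> {} = 0" unfolding Delta_def by simp
  also have "Delta \<psi> {0,1,2} = 0" unfolding Delta_def qubits_def by simp
  finally show ?thesis unfolding Delta_0 Delta_1 Delta_2 Delta_01 Delta_02 Delta_12 by simp
qed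

theorem mainTheorem5:
  fixes \<psi> :: "complex vec"
  assumes "is_pure_state \<psi>"
    and "ME \<psi> > 1 / 2"
  shows "genuinely_entangled \<psi>"
proof (rule ccontr)
  assume "\<not> genuinely_entangled \<psi>"
  then obtain Z where Z: "Z \<in> qubits" "product_across \<psi> Z" unfolding genuinely_entangled_def by blast
  then obtain \<phi> \<chi> :: "nat \<Rightarrow> complex" where prod: "\<forall>k<8. \<psi> $ k = \<phi> (sub_index (qubits - {Z}) k) * \<chi> (sub_index {Z} k)"
    unfolding product_across_def by blast
  have r: "(\<Sum>k<8. (cmod (\<psi> $ k))^2) = 1" using assms(1) unfolding is_pure_state_def by blast
  have norm: "(\<Sum>k<8. \<psi>$k * cnj (\<psi>$k)) = 1"
  proof -
    have "(\<Sum>k<8. \<psi>$k * cnj (\<psi>$k)) = (\<Sum>k<8. complex_of_real ((cmod (\<psi> $ k))^2))"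
      by (simp only: complex_norm_square)
    also have "\<dots> = complex_of_real (\<Sum>k<8. (cmod (\<psi> $ k))^2)" by simp
    finally show ?thesis using r by simp
  qed
  have "passive_energy (reduced \<psi> {0}) (ham {0}) + passive_energy (reduced \<psi> {1}) (ham {1}) + passive_energy (reduced \<psi> {2}) (ham {2}) + passive_energy (reduced \<psi> {0,1}) (ham {0,1}) + passive_energy (reduced \<psi> {0,2}) (ham {0,2}) + passive_energy (reduced \<psi> {1,2}) (ham {1,2}) \<le> 2"
  proof -
    have "Z = 0 \<or> Z = 1 \<or> Z = 2" using Z(1) unfolding qubits_def by auto
    moreover have ?thesis if "Z = 0" using caseZ0[OF norm, of \<phi> \<chi>] prod that by simp
    moreover have ?thesis if "Z = 1" using caseZ1[OF norm, of \<phi> \<chi>] prod that by simp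
    moreover have ?thesis if "Z = 2" using caseZ2[OF norm, of \<phi> \<chi>] prod that by simp
    ultimately show ?thesis by blast
  qed
  then have "ME \<psi> \<le> 1/2" unfolding ME_def sumME by simp
  then show False using assms(2) by simp
qed

end
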